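(* Let $(b,c)$ be a connected weighted graph over $X$ and consider: (A) $X$ is totally bounded with respect to $d$; (B) $X$ is totally bounded with respect to $\varrho$; (C) $X$ is totally bounded with respect to every metric $\sigma$ on $X$ which is intrinsic with respect to some measure $m$ with $m(X)<\infty$; (D) $\widetilde D\subseteq\ell^\infty(X)$. Then (A) $\Rightarrow$ (B) $\Rightarrow$ (D). If $c\equiv0$, then furthermore (B) $\Rightarrow$ (C) $\Rightarrow$ (D).
   Context: Let $X$ be a countably infinite set. A weighted graph $(b,c)$ over $X$ consists of a symmetric $b:X\times X\to[0,\infty)$ with $b(x,x)=0$ and $\sum_{y}b(x,y)<\infty$ for all $x$, and $c:X\to[0,\infty)$. A path is a finite sequence $(x_0,\dots,x_n)$ of pairwise distinct vertices with $b(x_{i-1},x_i)>0$; connected means any two distinct vertices are joined by a path. For $f:X\to\mathbb C$ let $\widetilde Q(f)=\frac12\sum_{x,y}b(x,y)|f(x)-f(y)|^2+\sum_x c(x)|f(x)|^2$ and $\widetilde D=\{f:\widetilde Q(f)<\infty\}$. Define $d(x,y)=\inf\{\sum_{i=1}^n1/b(x_{i-1},x_i):(x_0,\dots,x_n)\text{ a path from }x\text{ to }y\}$ ($d(x,x)=0$) and $\varrho(x,y)=\sup\{|f(x)-f(y)|:f\in\widetilde D,\widetilde Q(f)\le1\}$. A measure on $X$ is $m:X\to[0,\infty)$ with $m(A)=\sum_{x\in A}m(x)$; a metric $\sigma$ is intrinsic with respect to $m$ if $\frac12\sum_y b(x,y)\sigma(x,y)^2\le m(x)$ for all $x$. *)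

theory Defs
  imports "HOL-Analysis.Analysis"
begin

definition weighted_graph :: "('x \<Rightarrow> 'x \<Rightarrow> real) \<Rightarrow> ('x \<Rightarrow> real) \<Rightarrow> bool" where
  "weighted_graph b c \<longleftrightarrow>
     (\<forall>x y. b x y \<ge> 0) \<and> (\<forall>x y. b x y = b y x) \<and> (\<forall>x. b x x = 0) \<and>
     (\<forall>x. (\<lambda>y. b x y) summable_on UNIV) \<and> (\<forall>x. c x \<ge> 0)"

definition is_path :: "('x \<Rightarrow> 'x \<Rightarrow> real) \<Rightarrow> 'x list \<Rightarrow> bool" where
  "is_path b xs \<longleftrightarrow> xs \<noteq> [] \<and> distinct xs \<and>
     (\<forall>i. Suc i < length xs \<longrightarrow> b (xs ! i) (xs ! Suc i) > 0)"

definition path_from_to :: "('x \<Rightarrow> 'x \<Rightarrow> real) \<Rightarrow> 'x list \<Rightarrow> 'x \<Rightarrow> 'x \<Rightarrow> bool" where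
  "path_from_to b xs x y \<longleftrightarrow> is_path b xs \<and> hd xs = x \<and> last xs = y"

definition graph_connected :: "('x \<Rightarrow> 'x \<Rightarrow> real) \<Rightarrow> bool" where
  "graph_connected b \<longleftrightarrow> (\<forall>x y. x \<noteq> y \<longrightarrow> (\<exists>xs. path_from_to b xs x y))"

definition Qt :: "('x \<Rightarrow> 'x \<Rightarrow> real) \<Rightarrow> ('x \<Rightarrow> real) \<Rightarrow> ('x \<Rightarrow> complex) \<Rightarrow> ennreal" where
  "Qt b c f = ennreal (1/2) * (\<Sum>\<^sub>\<infinity>(x,y)\<in>UNIV. ennreal (b x y * (cmod (f x - f y))\<^sup>2))
             + (\<Sum>\<^sub>\<infinity>x\<in>UNIV. ennreal (c x * (cmod (f x))\<^sup>2))"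

definition Dt :: "('x \<Rightarrow> 'x \<Rightarrow> real) \<Rightarrow> ('x \<Rightarrow> real) \<Rightarrow> ('x \<Rightarrow> complex) set" where
  "Dt b c = {f. Qt b c f < \<infinity>}"

definition path_length :: "('x \<Rightarrow> 'x \<Rightarrow> real) \<Rightarrow> 'x list \<Rightarrow> real" where
  "path_length b xs = (\<Sum>i<length xs - 1. 1 / b (xs ! i) (xs ! Suc i))"

definition path_metric :: "('x \<Rightarrow> 'x \<Rightarrow> real) \<Rightarrow> 'x \<Rightarrow> 'x \<Rightarrow> real" where
  "path_metric b x y = (if x = y then 0 else Inf {path_length b xs | xs. path_from_to b xs x y})"

definition resistance_metric :: "('x \<Rightarrow> 'x \<Rightarrow> real) \<Rightarrow> ('x \<Rightarrow> real) \<Rightarrow> 'x \<Rightarrow> 'x \<Rightarrow> real" where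
  "resistance_metric b c x y = Sup {cmod (f x - f y) | f. f \<in> Dt b c \<and> Qt b c f \<le> 1}"

definition is_metric_on :: "('x \<Rightarrow> 'x \<Rightarrow> real) \<Rightarrow> bool" where
  "is_metric_on \<sigma> \<longleftrightarrow> (\<forall>x y. \<sigma> x y \<ge> 0) \<and> (\<forall>x y. \<sigma> x y = 0 \<longleftrightarrow> x = y) \<and>
     (\<forall>x y. \<sigma> x y = \<sigma> y x) \<and> (\<forall>x y z. \<sigma> x z \<le> \<sigma> x y + \<sigma> y z)"

definition totally_bounded_wrt :: "('x \<Rightarrow> 'x \<Rightarrow> real) \<Rightarrow> bool" where
  "totally_bounded_wrt \<sigma> \<longleftrightarrow> (\<forall>\<epsilon>>0. \<exists>F. finite F \<and> (\<forall>x. \<exists>y\<in>F. \<sigma> x y < \<epsilon>))"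

definition is_measure :: "('x \<Rightarrow> real) \<Rightarrow> bool" where
  "is_measure m \<longleftrightarrow> (\<forall>x. m x \<ge> 0)"

definition total_mass :: "('x \<Rightarrow> real) \<Rightarrow> ennreal" where
  "total_mass m = (\<Sum>\<^sub>\<infinity>x\<in>UNIV. ennreal (m x))"

definition intrinsic :: "('x \<Rightarrow> 'x \<Rightarrow> real) \<Rightarrow> ('x \<Rightarrow> real) \<Rightarrow> ('x \<Rightarrow> 'x \<Rightarrow> real) \<Rightarrow> bool" where
  "intrinsic b m \<sigma> \<longleftrightarrow>
     (\<forall>x. ennreal (1/2) * (\<Sum>\<^sub>\<infinity>y\<in>UNIV. ennreal (b x y * (\<sigma> x y)\<^sup>2)) \<le> ennreal (m x))"

definition bounded_fun :: "('x \<Rightarrow> complex) \<Rightarrow> bool" where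
  "bounded_fun f \<longleftrightarrow> (\<exists>C. \<forall>x. cmod (f x) \<le> C)"

end

theory Submission
  imports Defs
begin

lemma ens[simp]: "(f::'a\<Rightarrow>ennreal) summable_on S" by (rule nonneg_summable_on_complete) simp

lemma fin_le_ens: "finite F \<Longrightarrow> F \<subseteq> A \<Longrightarrow> sum (g::'a\<Rightarrow>ennreal) F \<le> infsum g A"
  by (subst nonneg_infsum_complete) (auto intro!: SUP_upper)

lemma ens_mono: "(\<And>x. (f::'a\<Rightarrow>ennreal) x \<le> g x) \<Longrightarrow> infsum f A \<le> infsum g A"
  by (rule infsum_mono_neutral) auto

lemma ens_subset: "A \<subseteq> B \<Longrightarrow> infsum (f::'a\<Rightarrow>ennreal) A \<le> infsum f B"
  by (rule infsum_mono_neutral) auto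

lemma fub_aux: "finite G \<Longrightarrow> (\<Sum>x\<in>G. infsum (\<lambda>y. (f::'a\<times>'b\<Rightarrow>ennreal) (x,y)) UNIV) = infsum f (G \<times> UNIV)"
proof (induction G rule: finite_induct)
  case empty then show ?case by simp
next
  case (insert a G)
  have e: "insert a G \<times> UNIV = (Pair a ` UNIV) \<union> (G \<times> UNIV)" by auto
  have "infsum f (insert a G \<times> UNIV) = infsum f (Pair a ` UNIV) + infsum f (G \<times> UNIV)"
    unfolding e by (rule infsum_Un_disjoint) (use insert in auto)
  also have "infsum f (Pair a ` UNIV) = infsum (\<lambda>y. f (a,y)) UNIV"
    by (subst infsum_reindex) (auto simp: inj_on_def o_def)
  finally show ?case using insert by simp
qed

lemma fub: "infsum (f::'a\<times>'b\<Rightarrow>ennreal) UNIV = infsum (\<lambda>x. infsum (\<lambda>y. f (x,y)) UNIV) UNIV"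
proof (rule antisym)
  show "infsum f UNIV \<le> infsum (\<lambda>x. infsum (\<lambda>y. f (x,y)) UNIV) UNIV"
  proof (subst nonneg_infsum_complete, simp, rule SUP_least, clarsimp)
    fix F :: "('a\<times>'b) set" assume F: "finite F"
    have "sum f F \<le> sum f (fst ` F \<times> snd ` F)"
      by (rule sum_mono2) (use F in force)+
    also have "\<dots> = (\<Sum>x\<in>fst ` F. \<Sum>y\<in>snd ` F. f (x,y))"
      by (simp add: sum.cartesian_product)
    also have "\<dots> \<le> (\<Sum>x\<in>fst ` F. infsum (\<lambda>y. f (x,y)) UNIV)"
      by (intro sum_mono fin_le_ens) (use F in auto)
    also have "\<dots> \<le> infsum (\<lambda>x. infsum (\<lambda>y. f (x,y)) UNIV) UNIV"
      by (rule fin_le_ens) (use F in auto)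
    finally show "sum f F \<le> infsum (\<lambda>x. infsum (\<lambda>y. f (x,y)) UNIV) UNIV" .
  qed
  show "infsum (\<lambda>x. infsum (\<lambda>y. f (x,y)) UNIV) UNIV \<le> infsum f UNIV"
  proof (subst nonneg_infsum_complete, simp, rule SUP_least, clarsimp)
    fix G :: "'a set" assume G: "finite G"
    show "(\<Sum>x\<in>G. infsum (\<lambda>y. f (x,y)) UNIV) \<le> infsum f UNIV"
      using fub_aux[OF G, of f] ens_subset[of "G \<times> UNIV" UNIV f] by simp
  qed
qed

lemma cm: "infsum (\<lambda>x. (c::ennreal) * f x) A = c * infsum f A"
  by (simp add: nonneg_infsum_complete SUP_mult_left_ennreal sum_distrib_left)

lemma path_bound:
  assumes wg: "weighted_graph b c" and Q: "Qt b c g \<le> 1" and p: "path_from_to b xs x y"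
  shows "(cmod (g x - g y))\<^sup>2 \<le> 2 * path_length b xs"
proof -
  define n where "n = length xs - 1"
  define a where "a i = xs ! i" for i
  define w where "w i = b (a i) (a (Suc i))" for i
  define D where "D i = cmod (g (a i) - g (a (Suc i)))" for i
  have ne: "xs \<noteq> []" and dist: "distinct xs" and pos: "\<And>i. Suc i < length xs \<Longrightarrow> b (xs!i) (xs!Suc i) > 0"
    and hd: "hd xs = x" and la: "last xs = y"
    using p unfolding path_from_to_def is_path_def by auto
  have wpos: "w i > 0" if "i < n" for i using pos[of i] that unfolding w_def a_def n_def by auto
  define E where "E = infsum (\<lambda>(u,v). ennreal (b u v * (cmod (g u - g v))\<^sup>2)) UNIV"
  have "ennreal (1/2) * E \<le> Qt b c g" unfolding Qt_def E_def by simp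
  then have "ennreal (1/2) * E \<le> 1" using Q by simp
  then have "ennreal 2 * (ennreal (1/2) * E) \<le> ennreal 2" by (metis mult.right_neutral mult_left_mono zero_le)
  moreover have "ennreal 2 * ennreal (1/2) = 1" by (subst ennreal_mult[symmetric]) auto
  ultimately have E2: "E \<le> 2" by (simp add: mult.assoc[symmetric])
  have inj: "inj_on (\<lambda>i. (a i, a (Suc i))) {..<n}"
    using dist unfolding inj_on_def a_def n_def by (auto simp: nth_eq_iff_index_eq)
  have "(\<Sum>i<n. ennreal (w i * (D i)\<^sup>2)) = (\<Sum>p\<in>(\<lambda>i. (a i, a (Suc i))) ` {..<n}. (\<lambda>(u,v). ennreal (b u v * (cmod (g u - g v))\<^sup>2)) p)"
    by (subst sum.reindex[OF inj]) (simp add: w_def D_def)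
  also have "\<dots> \<le> E" unfolding E_def by (rule fin_le_ens) auto
  finally have "ennreal (\<Sum>i<n. w i * (D i)\<^sup>2) \<le> 2" using E2
    by (subst sum_ennreal[symmetric]) (auto simp: D_def intro!: mult_nonneg_nonneg less_imp_le[OF wpos])
  then have S2: "(\<Sum>i<n. w i * (D i)\<^sup>2) \<le> 2"
    by (metis ennreal_le_iff ennreal_numeral zero_le_numeral)
  have tel: "g x - g y = (\<Sum>i<n. g (a i) - g (a (Suc i)))"
  proof -
    have "(\<Sum>i<n. g (a i) - g (a (Suc i))) = - (\<Sum>i<n. g (a (Suc i)) - g (a i))"
      by (simp add: sum_negf[symmetric])
    also have "\<dots> = g (a 0) - g (a n)" by (subst sum_lessThan_telescope) simp
    also have "a 0 = x" using hd ne by (simp add: a_def hd_conv_nth)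
    also have "a n = y" using la ne by (simp add: a_def n_def last_conv_nth)
    finally show ?thesis by simp
  qed
  have le1: "cmod (g x - g y) \<le> (\<Sum>i<n. D i)"
    unfolding tel D_def by (rule norm_sum)
  have "(\<Sum>i<n. D i) = (\<Sum>i<n. sqrt (1 / w i) * (sqrt (w i) * D i))"
  proof (rule sum.cong)
    fix i assume "i \<in> {..<n}"
    then have "w i > 0" using wpos by auto
    then have "sqrt (1 / w i) * sqrt (w i) = 1"
      by (metis real_sqrt_mult real_sqrt_one divide_self_if less_irrefl times_divide_eq_left mult_1)
    then show "D i = sqrt (1 / w i) * (sqrt (w i) * D i)" by (simp add: mult.assoc[symmetric])
  qed simp
  then have "(\<Sum>i<n. D i)\<^sup>2 \<le> (\<Sum>i<n. (sqrt (1 / w i))\<^sup>2) * (\<Sum>i<n. (sqrt (w i) * D i)\<^sup>2)"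
    using Cauchy_Schwarz_ineq_sum by metis
  also have "\<dots> = (\<Sum>i<n. 1 / w i) * (\<Sum>i<n. w i * (D i)\<^sup>2)"
    using wpos by (intro arg_cong2[where f="(*)"] sum.cong) (auto simp: power_mult_distrib less_imp_le)
  also have "\<dots> \<le> (\<Sum>i<n. 1 / w i) * 2"
    by (rule mult_left_mono[OF S2]) (auto intro!: sum_nonneg simp: less_imp_le wpos)
  also have "(\<Sum>i<n. 1 / w i) = path_length b xs"
    unfolding path_length_def n_def w_def a_def by simp
  finally have "(\<Sum>i<n. D i)\<^sup>2 \<le> 2 * path_length b xs" by simp
  moreover have "(cmod (g x - g y))\<^sup>2 \<le> (\<Sum>i<n. D i)\<^sup>2"
    using le1 by (intro power_mono) auto
  ultimately show ?thesis by linarith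
qed

lemma cm2: "infsum (\<lambda>x. f x * (c::ennreal)) A = infsum f A * c"
  using cm[of c f A] by (simp add: mult.commute)

lemma Qt_zero: "Qt b c (\<lambda>_. 0) = 0"
proof -
  have "(\<lambda>(x::'a,y::'a). 0::ennreal) = (\<lambda>_. 0)" by auto
  then show ?thesis unfolding Qt_def by simp
qed

lemma rho_set_ne: "{cmod (f x - f y) | f. f \<in> Dt b c \<and> Qt b c f \<le> 1} \<noteq> {}"
  using Qt_zero[of b c] by (auto simp: Dt_def intro!: exI[of _ "\<lambda>_. 0"])

lemma rho_set_bdd:
  assumes wg: "weighted_graph b c" and con: "graph_connected b"
  shows "bdd_above {cmod (f x - f y) | f. f \<in> Dt b c \<and> Qt b c f \<le> 1}"
proof (cases "x = y")
  case True then show ?thesis by (auto intro!: bdd_aboveI[of _ 0])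
next
  case False
  then obtain xs where p: "path_from_to b xs x y" using con unfolding graph_connected_def by blast
  show ?thesis
  proof (rule bdd_aboveI[of _ "sqrt (2 * path_length b xs)"], clarsimp)
    fix f assume "Qt b c f \<le> 1"
    from path_bound[OF wg this p] show "cmod (f x - f y) \<le> sqrt (2 * path_length b xs)"
      using real_le_rsqrt by blast
  qed
qed

lemma rho_le_d:
  assumes wg: "weighted_graph b c" and con: "graph_connected b"
  shows "resistance_metric b c x y \<le> sqrt (2 * path_metric b x y)"
proof (cases "x = y")
  case True
  have "resistance_metric b c x y \<le> 0" unfolding resistance_metric_def
    by (rule cSup_least[OF rho_set_ne]) (use True in auto)
  then show ?thesis using True by (simp add: path_metric_def)
next
  case False
  let ?P = "{path_length b xs | xs. path_from_to b xs x y}"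
  have Pne: "?P \<noteq> {}" using con False unfolding graph_connected_def by blast
  show ?thesis unfolding resistance_metric_def
  proof (rule cSup_least[OF rho_set_ne], clarsimp)
    fix f assume "f \<in> Dt b c" "Qt b c f \<le> 1"
    then have "(cmod (f x - f y))\<^sup>2 / 2 \<le> path_length b xs" if "path_from_to b xs x y" for xs
      using path_bound[OF wg _ that, of f] by simp
    then have "(cmod (f x - f y))\<^sup>2 / 2 \<le> Inf ?P"
      by (intro cInf_greatest[OF Pne]) auto
    then have "(cmod (f x - f y))\<^sup>2 \<le> 2 * path_metric b x y"
      using False by (simp add: path_metric_def)
    then show "cmod (f x - f y) \<le> sqrt (2 * path_metric b x y)"
      using real_le_rsqrt by blast
  qed
qed

lemma lip:
  assumes wg: "weighted_graph b c" and con: "graph_connected b"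
    and Q: "Qt b c f \<le> ennreal K" and K: "K \<ge> 1"
  shows "cmod (f x - f y) \<le> sqrt K * resistance_metric b c x y"
proof -
  define g where "g z = f z / complex_of_real (sqrt K)" for z
  have sK: "sqrt K > 0" using K by simp
  have t1: "ennreal (b u v * (cmod (g u - g v))\<^sup>2) = ennreal (1/K) * ennreal (b u v * (cmod (f u - f v))\<^sup>2)" for u v
  proof -
    have "g u - g v = (f u - f v) / complex_of_real (sqrt K)" by (simp add: g_def diff_divide_distrib)
    then have "(cmod (g u - g v))\<^sup>2 = (cmod (f u - f v))\<^sup>2 / K"
      using K by (simp add: norm_divide power_divide)
    then have "b u v * (cmod (g u - g v))\<^sup>2 = (1/K) * (b u v * (cmod (f u - f v))\<^sup>2)" by simp
    moreover have "b u v \<ge> 0" using wg unfolding weighted_graph_def by auto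
    ultimately show ?thesis using K by (simp only:) (rule ennreal_mult, auto)
  qed
  have t2: "ennreal (c u * (cmod (g u))\<^sup>2) = ennreal (1/K) * ennreal (c u * (cmod (f u))\<^sup>2)" for u
  proof -
    have "(cmod (g u))\<^sup>2 = (cmod (f u))\<^sup>2 / K"
      using K by (simp add: g_def norm_divide power_divide)
    then have "c u * (cmod (g u))\<^sup>2 = (1/K) * (c u * (cmod (f u))\<^sup>2)" by simp
    moreover have "c u \<ge> 0" using wg unfolding weighted_graph_def by auto
    ultimately show ?thesis using K by (simp only:) (rule ennreal_mult, auto)
  qed
  have p1: "infsum (\<lambda>(u,v). ennreal (b u v * (cmod (g u - g v))\<^sup>2)) UNIV
     = ennreal (1/K) * infsum (\<lambda>(u,v). ennreal (b u v * (cmod (f u - f v))\<^sup>2)) UNIV"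
    by (simp only: t1 case_prod_unfold cm)
  have p2: "infsum (\<lambda>u. ennreal (c u * (cmod (g u))\<^sup>2)) UNIV
     = ennreal (1/K) * infsum (\<lambda>u. ennreal (c u * (cmod (f u))\<^sup>2)) UNIV"
    by (simp only: t2 cm)
  have "Qt b c g = ennreal (1/K) * Qt b c f"
    unfolding Qt_def p1 p2 by (simp add: distrib_left mult.left_commute)
  also have "\<dots> \<le> ennreal (1/K) * ennreal K" by (rule mult_left_mono[OF Q]) simp
  also have "\<dots> = 1" using K by (simp add: ennreal_mult[symmetric])
  finally have Qg: "Qt b c g \<le> 1" .
  then have "g \<in> Dt b c" unfolding Dt_def by (simp add: order_le_less_trans)
  with Qg have "cmod (g x - g y) \<le> resistance_metric b c x y"
    unfolding resistance_metric_def by (intro cSup_upper[OF _ rho_set_bdd[OF wg con]]) auto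
  moreover have "f x - f y = complex_of_real (sqrt K) * (g x - g y)"
    using sK by (simp add: g_def field_simps)
  ultimately show ?thesis using sK by (simp add: norm_mult)
qed

lemma ennreal_infsum:
  assumes hs: "(f has_sum S) A" and nn: "\<And>x. x \<in> A \<Longrightarrow> f x \<ge> 0"
  shows "infsum (\<lambda>x. ennreal (f x)) A = ennreal S"
proof -
  have sm: "f summable_on A" and S: "S = infsum f A" using hs by (auto simp: summable_on_def infsumI)
  have "ennreal S = (SUP F\<in>{F. finite F \<and> F \<subseteq> A}. ennreal (sum f F))"
    unfolding S by (rule infsum_nonneg_is_SUPREMUM_ennreal[OF sm nn])
  also have "\<dots> = (SUP F\<in>{F. finite F \<and> F \<subseteq> A}. (\<Sum>x\<in>F. ennreal (f x)))"
    by (rule SUP_cong) (auto intro!: sum_ennreal[symmetric] nn)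
  also have "\<dots> = infsum (\<lambda>x. ennreal (f x)) A"
    by (rule nonneg_infsum_complete[symmetric]) simp
  finally show ?thesis by simp
qed

lemma geom_ens: "infsum (\<lambda>k::nat. ennreal ((1/2)^k)) UNIV = 2"
proof -
  have "(\<lambda>k::nat. (1/2::real)^k) sums 2" using geometric_sums[of "1/2::real"] by simp
  then have "((\<lambda>k::nat. (1/2::real)^k) has_sum 2) UNIV"
    by (rule sums_nonneg_imp_has_sum_strong) simp
  from ennreal_infsum[OF this] show ?thesis by simp
qed

lemma swap_ens: "infsum (\<lambda>(x,y). (g::'a\<Rightarrow>'a\<Rightarrow>ennreal) x y) UNIV = infsum (\<lambda>(x,y). g y x) UNIV"
proof -
  have "infsum (\<lambda>(x,y). g x y) (prod.swap ` UNIV) = infsum ((\<lambda>(x,y). g x y) \<circ> prod.swap) UNIV"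
    by (rule infsum_reindex) simp
  then show ?thesis by (simp add: o_def case_prod_unfold)
qed

lemma A_B:
  assumes wg: "weighted_graph b c" and con: "graph_connected b"
    and A: "totally_bounded_wrt (path_metric b)"
  shows "totally_bounded_wrt (resistance_metric b c)"
  unfolding totally_bounded_wrt_def
proof (intro allI impI)
  fix e :: real assume e: "e > 0"
  then have "e\<^sup>2 / 2 > 0" by simp
  with A obtain F where F: "finite F" "\<forall>x. \<exists>y\<in>F. path_metric b x y < e\<^sup>2 / 2"
    unfolding totally_bounded_wrt_def by blast
  have "\<exists>y\<in>F. resistance_metric b c x y < e" for x
  proof -
    obtain y where y: "y \<in> F" "path_metric b x y < e\<^sup>2 / 2" using F by blast
    have "resistance_metric b c x y \<le> sqrt (2 * path_metric b x y)" by (rule rho_le_d[OF wg con])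
    also have "\<dots> < sqrt (e\<^sup>2)" using y by (intro real_sqrt_less_mono) simp
    also have "\<dots> = e" using e by simp
    finally show ?thesis using y by blast
  qed
  then show "\<exists>F. finite F \<and> (\<forall>x. \<exists>y\<in>F. resistance_metric b c x y < e)" using F by blast
qed

lemma net_bounded:
  assumes F: "finite F" and net: "\<forall>x. \<exists>y\<in>F. cmod (f x - f y) \<le> L"
  shows "bounded_fun f"
  unfolding bounded_fun_def
proof (intro exI allI)
  fix x
  obtain y where y: "y \<in> F" "cmod (f x - f y) \<le> L" using net by blast
  have "cmod (f x) \<le> cmod (f y) + cmod (f x - f y)" by (metis norm_triangle_sub add.commute)
  also have "cmod (f y) \<le> (\<Sum>z\<in>F. cmod (f z))" using F y by (intro member_le_sum) auto
  finally show "cmod (f x) \<le> (\<Sum>z\<in>F. cmod (f z)) + L" using y by linarith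
qed

lemma B_D:
  assumes wg: "weighted_graph b c" and con: "graph_connected b"
    and B: "totally_bounded_wrt (resistance_metric b c)" and f: "f \<in> Dt b c"
  shows "bounded_fun f"
proof -
  have "Qt b c f < \<infinity>" using f by (simp add: Dt_def)
  then obtain K0 where K0: "Qt b c f = ennreal K0" by (cases "Qt b c f") auto
  define K where "K = max K0 1"
  have QK: "Qt b c f \<le> ennreal K" unfolding K0 K_def by (simp add: ennreal_leI)
  have K1: "K \<ge> 1" by (simp add: K_def)
  obtain F where F: "finite F" "\<forall>x. \<exists>y\<in>F. resistance_metric b c x y < 1"
    using B unfolding totally_bounded_wrt_def by (meson zero_less_one)
  have "\<forall>x. \<exists>y\<in>F. cmod (f x - f y) \<le> sqrt K"
  proof
    fix x obtain y where y: "y \<in> F" "resistance_metric b c x y < 1" using F by blast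
    have "cmod (f x - f y) \<le> sqrt K * resistance_metric b c x y" by (rule lip[OF wg con QK K1])
    also have "\<dots> \<le> sqrt K * 1" using y K1 by (intro mult_left_mono) auto
    finally show "\<exists>y\<in>F. cmod (f x - f y) \<le> sqrt K" using y by auto
  qed
  then show ?thesis by (rule net_bounded[OF F(1)])
qed

lemma B_C:
  assumes wg: "weighted_graph b c" and con: "graph_connected b" and c0: "\<forall>x. c x = 0"
    and B: "totally_bounded_wrt (resistance_metric b c)"
    and met: "is_metric_on \<sigma>" and ms: "is_measure m" and fin: "total_mass m < \<infinity>"
    and intr: "intrinsic b m \<sigma>"
  shows "totally_bounded_wrt \<sigma>"
proof -
  obtain M where M: "total_mass m = ennreal M" using fin by (cases "total_mass m") auto
  define K where "K = max M 1"
  have K1: "K \<ge> 1" by (simp add: K_def)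
  have bnn: "\<And>x y. b x y \<ge> 0" using wg by (simp add: weighted_graph_def)
  have sym: "\<And>x y. \<sigma> x y = \<sigma> y x" and tri: "\<And>x y z. \<sigma> x z \<le> \<sigma> x y + \<sigma> y z"
    and s0: "\<And>x. \<sigma> x x = 0"
    using met unfolding is_metric_on_def by auto
  have Qy: "Qt b c (\<lambda>z. complex_of_real (\<sigma> z y)) \<le> ennreal K" for y
  proof -
    have cz: "(\<lambda>x. ennreal (c x * (cmod (complex_of_real (\<sigma> x y)))\<^sup>2)) = (\<lambda>_. 0)"
      using c0 by auto
    have le: "ennreal (b u v * (cmod (complex_of_real (\<sigma> u y) - complex_of_real (\<sigma> v y)))\<^sup>2)
        \<le> ennreal (b u v * (\<sigma> u v)\<^sup>2)" for u v
    proof -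
      have "\<bar>\<sigma> u y - \<sigma> v y\<bar> \<le> \<sigma> u v" using tri[of u y v] tri[of v y u] sym[of u v] by linarith
      then have "(\<sigma> u y - \<sigma> v y)\<^sup>2 \<le> (\<sigma> u v)\<^sup>2" by (metis abs_le_square_iff abs_of_nonneg abs_ge_zero order_trans)
      moreover have "cmod (complex_of_real (\<sigma> u y) - complex_of_real (\<sigma> v y)) = \<bar>\<sigma> u y - \<sigma> v y\<bar>"
        by (metis norm_of_real of_real_diff)
      ultimately show ?thesis by (intro ennreal_leI mult_left_mono) (auto simp: bnn)
    qed
    have "Qt b c (\<lambda>z. complex_of_real (\<sigma> z y))
        = ennreal (1/2) * infsum (\<lambda>(u,v). ennreal (b u v * (cmod (complex_of_real (\<sigma> u y) - complex_of_real (\<sigma> v y)))\<^sup>2)) UNIV"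
      unfolding Qt_def cz by simp
    also have "\<dots> \<le> ennreal (1/2) * infsum (\<lambda>(u,v). ennreal (b u v * (\<sigma> u v)\<^sup>2)) UNIV"
      by (intro mult_left_mono ens_mono) (auto simp: le)
    also have "infsum (\<lambda>(u,v). ennreal (b u v * (\<sigma> u v)\<^sup>2)) UNIV
        = infsum (\<lambda>u. infsum (\<lambda>v. ennreal (b u v * (\<sigma> u v)\<^sup>2)) UNIV) UNIV"
      by (subst fub) simp
    also have "ennreal (1/2) * \<dots> = infsum (\<lambda>u. ennreal (1/2) * infsum (\<lambda>v. ennreal (b u v * (\<sigma> u v)\<^sup>2)) UNIV) UNIV"
      by (rule cm[symmetric])
    also have "\<dots> \<le> infsum (\<lambda>u. ennreal (m u)) UNIV"
      by (rule ens_mono) (use intr in \<open>simp add: intrinsic_def\<close>)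
    also have "\<dots> = ennreal M" using M by (simp add: total_mass_def)
    also have "\<dots> \<le> ennreal K" by (simp add: K_def ennreal_leI)
    finally show ?thesis .
  qed
  have sle: "\<sigma> x y \<le> sqrt K * resistance_metric b c x y" for x y
  proof -
    have "cmod (complex_of_real (\<sigma> x y) - complex_of_real (\<sigma> y y)) \<le> sqrt K * resistance_metric b c x y"
      by (rule lip[OF wg con Qy K1])
    moreover have "\<sigma> x y \<ge> 0" using met by (simp add: is_metric_on_def)
    ultimately show ?thesis using s0[of y] by simp
  qed
  show ?thesis unfolding totally_bounded_wrt_def
  proof (intro allI impI)
    fix e :: real assume e: "e > 0"
    have sK: "sqrt K > 0" using K1 by simp
    then have "e / sqrt K > 0" using e by simp
    then obtain F where F: "finite F" "\<forall>x. \<exists>y\<in>F. resistance_metric b c x y < e / sqrt K"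
      using B unfolding totally_bounded_wrt_def by blast
    have "\<exists>y\<in>F. \<sigma> x y < e" for x
    proof -
      obtain y where y: "y \<in> F" "resistance_metric b c x y < e / sqrt K" using F by blast
      have "\<sigma> x y \<le> sqrt K * resistance_metric b c x y" by (rule sle)
      also have "\<dots> < sqrt K * (e / sqrt K)" using y sK by (intro mult_strict_left_mono) auto
      also have "\<dots> = e" using sK by simp
      finally show ?thesis using y by blast
    qed
    then show "\<exists>F. finite F \<and> (\<forall>x. \<exists>y\<in>F. \<sigma> x y < e)" using F by blast
  qed
qed


lemma mult_fin: "X < \<infinity> \<Longrightarrow> ennreal a * X < \<infinity>"
  by (simp add: ennreal_mult_less_top)
lemma sq2: "(a+b)\<^sup>2 \<le> 2*a\<^sup>2 + 2*(b::real)\<^sup>2"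
proof -
  have "0 \<le> (a-b)\<^sup>2" by simp
  then show ?thesis by (simp add: power2_diff power2_sum)
qed
lemma numr: "0 \<le> X \<Longrightarrow> ennreal (numeral k * X) = numeral k * ennreal X"
  by (simp add: ennreal_mult)
lemma ennreal_plus_num: "0 \<le> X \<Longrightarrow> 0 \<le> Y \<Longrightarrow> ennreal (X + Y) = ennreal X + ennreal Y"
  by (rule ennreal_plus)
lemma C_D:
  fixes b :: "'x \<Rightarrow> 'x \<Rightarrow> real"
  assumes cnt: "countable (UNIV :: 'x set)" and wg: "weighted_graph b c"
    and C: "\<forall>\<sigma> m. is_metric_on \<sigma> \<and> is_measure m \<and> total_mass m < \<infinity> \<and> intrinsic b m \<sigma>
                 \<longrightarrow> totally_bounded_wrt \<sigma>"
    and f: "f \<in> Dt b c"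
  shows "bounded_fun f"
proof -
  have bnn: "\<And>x y. b x y \<ge> 0" and bsym: "\<And>x y. b x y = b y x"
    and bsum: "\<And>x. (\<lambda>y. b x y) summable_on UNIV" and cnn: "\<And>x. c x \<ge> 0"
    using wg by (auto simp: weighted_graph_def)
  define n where "n = to_nat_on (UNIV :: 'x set)"
  have injn: "inj n" unfolding n_def using cnt by (rule inj_on_to_nat_on)
  define deg where "deg x = infsum (\<lambda>y. b x y) UNIV" for x
  have degnn: "deg x \<ge> 0" for x unfolding deg_def by (rule infsum_nonneg) (simp add: bnn)
  define w where "w x = sqrt ((1/2)^(n x) / (1 + deg x))" for x
  have wpos: "w x > 0" for x unfolding w_def using degnn[of x] by (simp add: add_pos_nonneg)
  have wsq: "(w x)\<^sup>2 * deg x \<le> (1/2)^(n x)" for x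
  proof -
    have "(w x)\<^sup>2 = (1/2)^(n x) / (1 + deg x)" unfolding w_def using degnn[of x]
      by (simp add: add_nonneg_nonneg)
    moreover have "(1/2::real)^(n x) / (1 + deg x) * deg x \<le> (1/2)^(n x)"
    proof -
      have "deg x / (1 + deg x) \<le> 1" using degnn[of x] by simp
      then have "(1/2::real)^(n x) * (deg x / (1 + deg x)) \<le> (1/2)^(n x) * 1"
        by (intro mult_left_mono) auto
      then show ?thesis by simp
    qed
    ultimately show ?thesis by simp
  qed
  define \<delta> where "\<delta> x y = (if x = y then 0 else w x + w y)" for x y
  define \<sigma> where "\<sigma> x y = cmod (f x - f y) + \<delta> x y" for x y
  have dnn: "\<delta> x y \<ge> 0" for x y unfolding \<delta>_def using wpos[of x] wpos[of y] by auto
  have met: "is_metric_on \<sigma>"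
    unfolding is_metric_on_def
  proof (intro conjI allI)
    fix x y z
    show "\<sigma> x y \<ge> 0" unfolding \<sigma>_def using dnn[of x y] by simp
    show "\<sigma> x y = 0 \<longleftrightarrow> x = y"
      unfolding \<sigma>_def \<delta>_def using wpos[of x] wpos[of y] by (auto; smt (verit) norm_ge_zero)
    show "\<sigma> x y = \<sigma> y x" unfolding \<sigma>_def \<delta>_def by (simp add: norm_minus_commute)
    have "cmod (f x - f z) \<le> cmod (f x - f y) + cmod (f y - f z)" by (rule norm_diff_triangle_le[of _ "f y"]) simp_all
    moreover have "\<delta> x z \<le> \<delta> x y + \<delta> y z"
      unfolding \<delta>_def using wpos[of x] wpos[of y] wpos[of z] by auto
    ultimately show "\<sigma> x z \<le> \<sigma> x y + \<sigma> y z" unfolding \<sigma>_def by simp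
  qed
  define Ef where "Ef = infsum (\<lambda>(u,v). ennreal (b u v * (cmod (f u - f v))\<^sup>2)) UNIV"
  have "ennreal (1/2) * Ef \<le> Qt b c f" unfolding Qt_def Ef_def by simp
  also have "\<dots> < \<infinity>" using f by (simp add: Dt_def)
  finally have "ennreal (1/2) * Ef < \<infinity>" .
  then have Efin: "Ef < \<infinity>" by (auto simp: ennreal_mult_less_top top.not_eq_extremum)
  define W where "W = infsum (\<lambda>(u,v). ennreal (b u v * (w u)\<^sup>2)) UNIV"
  have "W = infsum (\<lambda>u. infsum (\<lambda>v. ennreal (b u v * (w u)\<^sup>2)) UNIV) UNIV"
    unfolding W_def by (subst fub) simp
  also have "\<dots> = infsum (\<lambda>u. ennreal ((w u)\<^sup>2 * deg u)) UNIV"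
  proof (rule infsum_cong)
    fix u
    have "infsum (\<lambda>v. ennreal (b u v * (w u)\<^sup>2)) UNIV = infsum (\<lambda>v. ennreal (b u v)) UNIV * ennreal ((w u)\<^sup>2)"
      by (simp add: ennreal_mult bnn cm2)
    also have "infsum (\<lambda>v. ennreal (b u v)) UNIV = ennreal (deg u)"
      unfolding deg_def by (rule ennreal_infsum) (use bsum bnn in auto)
    finally show "infsum (\<lambda>v. ennreal (b u v * (w u)\<^sup>2)) UNIV = ennreal ((w u)\<^sup>2 * deg u)"
      by (simp add: ennreal_mult degnn mult.commute)
  qed
  also have "\<dots> \<le> infsum (\<lambda>u. ennreal ((1/2)^(n u))) UNIV"
    by (rule ens_mono) (simp add: ennreal_leI wsq)
  also have "\<dots> = infsum (\<lambda>k. ennreal ((1/2)^k)) (n ` UNIV)"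
    by (subst infsum_reindex[OF injn]) (simp add: o_def)
  also have "\<dots> \<le> infsum (\<lambda>k. ennreal ((1/2)^k)) UNIV" by (rule ens_subset) simp
  also have "\<dots> = 2" by (rule geom_ens)
  finally have Wfin: "W < \<infinity>" by (simp add: order_le_less_trans)
  have W2: "infsum (\<lambda>(u,v). ennreal (b u v * (w v)\<^sup>2)) UNIV = W"
    unfolding W_def by (subst swap_ens) (simp add: bsym)
  define T where "T = infsum (\<lambda>(u,v). ennreal (b u v * (\<sigma> u v)\<^sup>2)) UNIV"
  have pt: "ennreal (b u v * (\<sigma> u v)\<^sup>2) \<le> 2 * ennreal (b u v * (cmod (f u - f v))\<^sup>2)
        + (4 * ennreal (b u v * (w u)\<^sup>2) + 4 * ennreal (b u v * (w v)\<^sup>2))" for u v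
  proof -
    have d2: "(\<delta> u v)\<^sup>2 \<le> 2 * (w u)\<^sup>2 + 2 * (w v)\<^sup>2"
      unfolding \<delta>_def by (auto intro: sq2)
    have "(\<sigma> u v)\<^sup>2 \<le> 2 * (cmod (f u - f v))\<^sup>2 + 2 * (\<delta> u v)\<^sup>2"
      unfolding \<sigma>_def by (rule sq2)
    then have "(\<sigma> u v)\<^sup>2 \<le> 2 * (cmod (f u - f v))\<^sup>2 + (4 * (w u)\<^sup>2 + 4 * (w v)\<^sup>2)" using d2 by linarith
    then have "b u v * (\<sigma> u v)\<^sup>2 \<le> 2 * (b u v * (cmod (f u - f v))\<^sup>2) + (4 * (b u v * (w u)\<^sup>2) + 4 * (b u v * (w v)\<^sup>2))"
      using mult_left_mono[OF _ bnn[of u v]] by (metis distrib_left mult.left_commute)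
    then have "ennreal (b u v * (\<sigma> u v)\<^sup>2) \<le> ennreal (2 * (b u v * (cmod (f u - f v))\<^sup>2) + (4 * (b u v * (w u)\<^sup>2) + 4 * (b u v * (w v)\<^sup>2)))"
      by (rule ennreal_leI)
    also have "\<dots> = 2 * ennreal (b u v * (cmod (f u - f v))\<^sup>2) + (4 * ennreal (b u v * (w u)\<^sup>2) + 4 * ennreal (b u v * (w v)\<^sup>2))"
      by (simp only: ennreal_plus_num bnn zero_le_power2 mult_nonneg_nonneg add_nonneg_nonneg numr)
    finally show ?thesis .
  qed
  have "T \<le> infsum (\<lambda>(u,v). 2 * ennreal (b u v * (cmod (f u - f v))\<^sup>2)
        + (4 * ennreal (b u v * (w u)\<^sup>2) + 4 * ennreal (b u v * (w v)\<^sup>2))) UNIV"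
    unfolding T_def by (rule ens_mono) (auto simp: pt)
  also have "\<dots> = 2 * Ef + (4 * W + 4 * infsum (\<lambda>(u,v). ennreal (b u v * (w v)\<^sup>2)) UNIV)"
    unfolding Ef_def W_def
    by (simp only: case_prod_unfold infsum_add ens cm)
  also have "\<dots> = 2 * Ef + (4 * W + 4 * W)" by (simp only: W2)
  finally have Tfin: "T < \<infinity>" using Efin Wfin
    by (simp add: order_le_less_trans ennreal_mult_less_top)
  define Tx where "Tx x = ennreal (1/2) * infsum (\<lambda>z. ennreal (b x z * (\<sigma> x z)\<^sup>2)) UNIV" for x
  have sumT: "infsum Tx UNIV = ennreal (1/2) * T"
    unfolding Tx_def T_def by (subst fub) (simp add: cm)
  have Txfin: "Tx x < \<infinity>" for x
  proof -
    have "Tx x = sum Tx {x}" by simp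
    also have "\<dots> \<le> infsum Tx UNIV" by (rule fin_le_ens) auto
    also have "\<dots> < \<infinity>" using Tfin unfolding sumT by (rule mult_fin)
    finally show ?thesis .
  qed
  define m where "m x = enn2real (Tx x)" for x
  have mTx: "ennreal (m x) = Tx x" for x unfolding m_def using Txfin[of x] by simp
  have "is_measure m" unfolding is_measure_def m_def by simp
  moreover have "total_mass m < \<infinity>"
    unfolding total_mass_def mTx using Tfin unfolding sumT by (rule mult_fin)
  moreover have "intrinsic b m \<sigma>" unfolding intrinsic_def mTx Tx_def by simp
  ultimately have "totally_bounded_wrt \<sigma>" using C met by blast
  then obtain F where F: "finite F" "\<forall>x. \<exists>y\<in>F. \<sigma> x y < 1"
    unfolding totally_bounded_wrt_def by (meson zero_less_one)
  have "\<forall>x. \<exists>y\<in>F. cmod (f x - f y) \<le> 1"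
  proof
    fix x obtain y where "y \<in> F" "\<sigma> x y < 1" using F by blast
    then show "\<exists>y\<in>F. cmod (f x - f y) \<le> 1" using dnn[of x y] unfolding \<sigma>_def by force
  qed
  then show ?thesis by (rule net_bounded[OF F(1)])
qed

theorem mainTheorem8:
  fixes b :: "'x \<Rightarrow> 'x \<Rightarrow> real" and c :: "'x \<Rightarrow> real"
  assumes "countable (UNIV :: 'x set)" and "infinite (UNIV :: 'x set)"
    and "weighted_graph b c" and "graph_connected b"
  defines "A \<equiv> totally_bounded_wrt (path_metric b)"
    and "B \<equiv> totally_bounded_wrt (resistance_metric b c)"
    and "C \<equiv> (\<forall>\<sigma> m. is_metric_on \<sigma> \<and> is_measure m \<and> total_mass m < \<infinity> \<and> intrinsic b m \<sigma>
                 \<longrightarrow> totally_bounded_wrt \<sigma>)"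
    and "D \<equiv> (\<forall>f \<in> Dt b c. bounded_fun f)"
  shows "(A \<longrightarrow> B) \<and> (B \<longrightarrow> D) \<and> ((\<forall>x. c x = 0) \<longrightarrow> (B \<longrightarrow> C) \<and> (C \<longrightarrow> D))"
  proof -
  have AB: "A \<longrightarrow> B" unfolding A_def B_def using A_B[OF assms(3,4)] by blast
  have BD: "B \<longrightarrow> D" unfolding B_def D_def using B_D[OF assms(3,4)] by blast
  have CD: "C \<longrightarrow> D" unfolding C_def D_def using C_D[OF assms(1,3)] by blast
  have BC: "(\<forall>x. c x = 0) \<longrightarrow> B \<longrightarrow> C" unfolding B_def C_def using B_C[OF assms(3,4)] by blast
  show ?thesis using AB BD CD BC by blast
qed

end
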